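(* Let $M$ be a minimal dominating set of a finite tree $T$ and let $v\in a_1(M)$. Let $N=N[v]\cap N_1(M)$ and $M_0=(M\setminus\{v\})\cup N$. Then Algorithm 1 (described below), applied to $T$ rooted at $v$ and the set $M_0$, outputs a minimal dominating set $M_i$ with $|M_i|\ge|M_0|\ge|M|$. Algorithm 1: set $i=0$; while $M_i$ is not a minimal dominating set: choose a supported vertex $u_i\in M_i\setminus a(M_i)$ of least depth; let $A_{i+1}$ be the set of vertices of $a_1(M_i)$ adjacent to $u_i$; let $N_{i+1}$ be the set of vertices of $N_1(M_i)$ adjacent to a vertex of $A_{i+1}$; set $M_{i+1}=(M_i\setminus A_{i+1})\cup N_{i+1}$ and increase $i$ by one. When the loop ends, return $M_i$.
   Context: A dominating set of a graph $G=(V,E)$ is a set $S\subseteq V$ such that every vertex is in $S$ or adjacent to a vertex of $S$; it is minimal if no proper subset is dominating. $N[u]=N(u)\cup\{u\}$ is the closed neighbourhood. For a dominating set $S$: $a(S)=\{u\in S: S\setminus\{u\}\text{ is not dominating}\}$ (critical vertices); vertices of $S\setminus a(S)$ are called supported; $N_1(S)=\{u\in V\setminus S: |N[u]\cap S|=1\}$; $a_1(S)=\{u\in a(S): N[u]\cap N_1(S)\ne\emptyset\}$. In a tree rooted at $v$, depth of a vertex is its distance to $v$. *)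

theory Defs
  imports Main
begin

definition simple_graph :: "'a set \<Rightarrow> ('a \<Rightarrow> 'a \<Rightarrow> bool) \<Rightarrow> bool" where
  "simple_graph V E \<longleftrightarrow> (\<forall>x y. E x y \<longrightarrow> x \<in> V \<and> y \<in> V \<and> x \<noteq> y \<and> E y x)"

definition connected_graph :: "'a set \<Rightarrow> ('a \<Rightarrow> 'a \<Rightarrow> bool) \<Rightarrow> bool" where
  "connected_graph V E \<longleftrightarrow> (\<forall>x\<in>V. \<forall>y\<in>V. E\<^sup>*\<^sup>* x y)"

definition is_cycle :: "('a \<Rightarrow> 'a \<Rightarrow> bool) \<Rightarrow> 'a list \<Rightarrow> bool" where
  "is_cycle E cs \<longleftrightarrow> length cs \<ge> 3 \<and> distinct cs
     \<and> (\<forall>i. Suc i < length cs \<longrightarrow> E (cs ! i) (cs ! Suc i))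
     \<and> E (last cs) (hd cs)"

definition is_tree :: "'a set \<Rightarrow> ('a \<Rightarrow> 'a \<Rightarrow> bool) \<Rightarrow> bool" where
  "is_tree V E \<longleftrightarrow> finite V \<and> V \<noteq> {} \<and> simple_graph V E \<and> connected_graph V E
     \<and> (\<nexists>cs. is_cycle E cs)"

definition cnbhd :: "('a \<Rightarrow> 'a \<Rightarrow> bool) \<Rightarrow> 'a \<Rightarrow> 'a set" where
  "cnbhd E u = {w. w = u \<or> E u w}"

definition dominating :: "'a set \<Rightarrow> ('a \<Rightarrow> 'a \<Rightarrow> bool) \<Rightarrow> 'a set \<Rightarrow> bool" where
  "dominating V E S \<longleftrightarrow> S \<subseteq> V \<and> (\<forall>x\<in>V. x \<in> S \<or> (\<exists>s\<in>S. E x s))"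

definition minimal_dominating :: "'a set \<Rightarrow> ('a \<Rightarrow> 'a \<Rightarrow> bool) \<Rightarrow> 'a set \<Rightarrow> bool" where
  "minimal_dominating V E S \<longleftrightarrow> dominating V E S \<and> (\<forall>S'. S' \<subset> S \<longrightarrow> \<not> dominating V E S')"

definition crit :: "'a set \<Rightarrow> ('a \<Rightarrow> 'a \<Rightarrow> bool) \<Rightarrow> 'a set \<Rightarrow> 'a set" where
  "crit V E S = {u \<in> S. \<not> dominating V E (S - {u})}"

definition N1 :: "'a set \<Rightarrow> ('a \<Rightarrow> 'a \<Rightarrow> bool) \<Rightarrow> 'a set \<Rightarrow> 'a set" where
  "N1 V E S = {u \<in> V - S. card (cnbhd E u \<inter> S) = 1}"

definition a1 :: "'a set \<Rightarrow> ('a \<Rightarrow> 'a \<Rightarrow> bool) \<Rightarrow> 'a set \<Rightarrow> 'a set" where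
  "a1 V E S = {u \<in> crit V E S. cnbhd E u \<inter> N1 V E S \<noteq> {}}"

definition gdist :: "('a \<Rightarrow> 'a \<Rightarrow> bool) \<Rightarrow> 'a \<Rightarrow> 'a \<Rightarrow> nat" where
  "gdist E v u = (LEAST n. (E ^^ n) v u)"

definition alg_step :: "'a set \<Rightarrow> ('a \<Rightarrow> 'a \<Rightarrow> bool) \<Rightarrow> 'a \<Rightarrow> 'a set \<Rightarrow> 'a set \<Rightarrow> bool" where
  "alg_step V E v Mi Mi' \<longleftrightarrow> \<not> minimal_dominating V E Mi \<and>
     (\<exists>u. u \<in> Mi - crit V E Mi \<and> (\<forall>u' \<in> Mi - crit V E Mi. gdist E v u \<le> gdist E v u') \<and>
        (let A = {a \<in> a1 V E Mi. E a u};
             N = {w \<in> N1 V E Mi. \<exists>a\<in>A. E w a}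
         in Mi' = (Mi - A) \<union> N))"

end

theory Submission
  imports Defs
begin


fun chain :: "('a \<Rightarrow> 'a) \<Rightarrow> 'a \<Rightarrow> nat \<Rightarrow> 'a list" where
  "chain p x 0 = [x]"
| "chain p x (Suc n) = x # chain p (p x) n"

lemma chain_hd[simp]: "hd (chain p x n) = x"
  by (cases n) auto

lemma chain_ne[simp]: "chain p x n \<noteq> []"
  by (cases n) auto

lemma chain_last: "last (chain p x n) = (p ^^ n) x"
  by (induction n arbitrary: x) (auto simp: funpow_swap1)

lemma chain_len[simp]: "length (chain p x n) = Suc n"
  by (induction n arbitrary: x) auto

lemma chain_set: "z \<in> set (chain p x n) \<Longrightarrow> \<exists>i\<le>n. z = (p ^^ i) x"
proof (induction n arbitrary: x)
  case 0 then show ?case by auto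
next
  case (Suc n)
  show ?case
  proof (cases "z = x")
    case True then show ?thesis by (rule_tac x=0 in exI) auto
  next
    case False
    then have "z \<in> set (chain p (p x) n)" using Suc.prems by auto
    then obtain i where "i \<le> n" "z = (p ^^ i) (p x)" using Suc.IH by blast
    then show ?thesis by (rule_tac x="Suc i" in exI) (auto simp: funpow_swap1)
  qed
qed

locale pre =
  fixes V :: "'a set" and E :: "'a \<Rightarrow> 'a \<Rightarrow> bool" and v :: 'a and p :: "'a \<Rightarrow> 'a" and dep :: "'a \<Rightarrow> nat"
  assumes sg: "simple_graph V E" and vV: "v \<in> V"
   and P1: "\<And>x. x \<in> V \<Longrightarrow> x \<noteq> v \<Longrightarrow> E x (p x) \<and> dep x = Suc (dep (p x))"
   and dep0: "\<And>x. x \<in> V \<Longrightarrow> dep x = 0 \<longleftrightarrow> x = v"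
begin

lemma Esym: "E x y \<Longrightarrow> E y x" using sg unfolding simple_graph_def by blast
lemma EV: "E x y \<Longrightarrow> x \<in> V \<and> y \<in> V \<and> x \<noteq> y" using sg unfolding simple_graph_def by blast

lemma anc: "x \<in> V \<Longrightarrow> i \<le> dep x \<Longrightarrow> (p ^^ i) x \<in> V \<and> dep ((p ^^ i) x) = dep x - i"
proof (induction i)
  case 0 then show ?case by simp
next
  case (Suc i)
  then have h: "(p ^^ i) x \<in> V" "dep ((p ^^ i) x) = dep x - i" by auto
  then have "(p ^^ i) x \<noteq> v" using dep0 Suc.prems by force
  then show ?case using P1[OF h(1)] h EV by auto
qed

lemma anc_root: "x \<in> V \<Longrightarrow> (p ^^ dep x) x = v"
  using anc[of x "dep x"] dep0 by auto

lemma chain_succ: "x \<in> V \<Longrightarrow> n \<le> dep x \<Longrightarrow> successively E (chain p x n)"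
proof (induction n arbitrary: x)
  case 0 then show ?case by simp
next
  case (Suc n)
  then have "x \<noteq> v" using dep0 by force
  then have "E x (p x)" "dep x = Suc (dep (p x))" "p x \<in> V" using P1 Suc.prems EV by auto
  then show ?case using Suc by (auto simp: successively_Cons)
qed

lemma chain_dist: "x \<in> V \<Longrightarrow> n \<le> dep x \<Longrightarrow> distinct (chain p x n)"
proof (induction n arbitrary: x)
  case 0 then show ?case by simp
next
  case (Suc n)
  then have "x \<noteq> v" using dep0 by force
  then have h: "E x (p x)" "dep x = Suc (dep (p x))" "p x \<in> V" using P1 Suc.prems EV by auto
  have "x \<notin> set (chain p (p x) n)"
  proof
    assume "x \<in> set (chain p (p x) n)"
    then obtain i where "i \<le> n" "x = (p ^^ i) (p x)" using chain_set by metis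
    then show False using anc[of "p x" i] h Suc.prems by auto
  qed
  then show ?case using Suc h by auto
qed

lemma P2: assumes "E x y" "\<not> (x \<noteq> v \<and> p x = y)" "\<not> (y \<noteq> v \<and> p y = x)"
  shows "\<exists>cs. is_cycle E cs"
proof -
  have xV: "x \<in> V" and yV: "y \<in> V" and xy: "x \<noteq> y" using EV assms(1) by auto
  define Q where "Q = (\<lambda>k. \<exists>m\<le>dep y. (p ^^ k) x = (p ^^ m) y)"
  have Qd: "Q (dep x)" unfolding Q_def using anc_root xV yV by auto
  define k where "k = (LEAST k. Q k)"
  have Qk: "Q k" unfolding k_def by (rule LeastI[of Q, OF Qd])
  have kle: "k \<le> dep x" unfolding k_def by (rule Least_le[of Q, OF Qd])
  have kmin: "\<And>i. i < k \<Longrightarrow> \<not> Q i" unfolding k_def by (rule not_less_Least)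
  obtain m where mle: "m \<le> dep y" and km: "(p ^^ k) x = (p ^^ m) y" using Qk Q_def by blast
  have sx: "successively E (chain p x k)" "distinct (chain p x k)"
    using chain_succ chain_dist xV kle by auto
  show ?thesis
  proof (cases m)
    case 0
    then have yk: "(p ^^ k) x = y" using km by simp
    have "k \<noteq> 0" using yk xy by (cases k) auto
    moreover have "k \<noteq> 1" using yk assms(3) assms(2) dep0[OF xV] kle by (cases "x = v") auto
    ultimately have k2: "k \<ge> 2" by auto
    have "is_cycle E (chain p x k)"
      unfolding is_cycle_def using sx k2 yk Esym[OF assms(1)]
      by (auto simp: successively_conv_nth chain_last)
    then show ?thesis by blast
  next
    case (Suc m')
    have sy: "successively E (chain p y m')" "distinct (chain p y m')"
      using chain_succ chain_dist yV mle Suc by auto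
    have am: "(p ^^ m') y \<in> V" "dep ((p ^^ m') y) = dep y - m'" using anc yV mle Suc by auto
    then have amv: "(p ^^ m') y \<noteq> v" using dep0 mle Suc by force
    have jn: "E ((p ^^ m') y) ((p ^^ m) y)" using P1[OF am(1) amv] Suc by simp
    define cs where "cs = chain p x k @ rev (chain p y m')"
    have succ: "successively E cs"
      unfolding cs_def successively_append_iff using sx(1) sy(1) jn km Esym
      by (auto simp: chain_last last_rev hd_rev successively_rev intro: successively_mono)
    have disj: "set (chain p x k) \<inter> set (chain p y m') = {}"
    proof (rule ccontr)
      assume "\<not> ?thesis"
      then obtain z where z1: "z \<in> set (chain p x k)" and z2: "z \<in> set (chain p y m')" by blast
      obtain i where i: "i \<le> k" "z = (p ^^ i) x" using chain_set z1 by metis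
      obtain j where j: "j \<le> m'" "z = (p ^^ j) y" using chain_set z2 by metis
      show False
      proof (cases "i < k")
        case True
        then have "Q i" unfolding Q_def using i j mle Suc by (rule_tac x=j in exI) auto
        then show False using kmin True by blast
      next
        case False
        then have "(p ^^ m) y = (p ^^ j) y" using i j km by auto
        then show False using anc[OF yV, of m] anc[OF yV, of j] j mle Suc by auto
      qed
    qed
    have len: "length cs \<ge> 3"
    proof -
      have "\<not> (k = 0 \<and> m' = 0)"
      proof
        assume "k = 0 \<and> m' = 0"
        then have "x = p y" using km Suc by simp
        moreover have "y \<noteq> v" using dep0 yV mle Suc by force
        ultimately show False using assms(3) by blast
      qed
      then show ?thesis unfolding cs_def by auto
    qed
    have "is_cycle E cs"
      unfolding is_cycle_def using succ len disj sx(2) sy(2) Esym[OF assms(1)]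
      by (auto simp: successively_conv_nth cs_def hd_append last_rev)
    then show ?thesis by blast
  qed
qed
end

lemma tree_parent:
  assumes T: "is_tree V E" and vV: "v \<in> V"
  shows "\<exists>p. pre V E v p (gdist E v) \<and> (\<forall>x y. E x y \<longrightarrow> (x \<noteq> v \<and> p x = y) \<or> (y \<noteq> v \<and> p y = x))"
proof -
  define dep where "dep = gdist E v"
  have sg: "simple_graph V E" and cg: "connected_graph V E" and nc: "\<nexists>cs. is_cycle E cs"
    using T unfolding is_tree_def by auto
  have reach: "(E ^^ dep x) v x" if "x \<in> V" for x
  proof -
    have "E\<^sup>*\<^sup>* v x" using cg vV that unfolding connected_graph_def by blast
    then obtain n where "(E ^^ n) v x" using rtranclp_imp_relpowp by metis
    then show ?thesis unfolding dep_def gdist_def by (rule LeastI)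
  qed
  have le: "dep x \<le> n" if "(E ^^ n) v x" for x n
    unfolding dep_def gdist_def using that by (rule Least_le)
  have dep0: "dep x = 0 \<longleftrightarrow> x = v" if "x \<in> V" for x
  proof
    assume "dep x = 0" then show "x = v" using reach[OF that] by simp
  next
    assume "x = v" then show "dep x = 0" using le[of 0 x] by simp
  qed
  have par: "\<exists>y. E x y \<and> dep x = Suc (dep y)" if xV: "x \<in> V" and xv: "x \<noteq> v" for x
  proof -
    obtain k where k: "dep x = Suc k" using dep0[OF xV] xv by (cases "dep x") auto
    then have "(E ^^ Suc k) v x" using reach[OF xV] by simp
    then obtain y where y: "(E ^^ k) v y" "E y x" by (rule relpowp_Suc_E)
    have "dep y \<le> k" using le y(1) .
    moreover have "(E ^^ Suc (dep y)) v x"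
      using relpowp_Suc_I[OF reach y(2)] y(2) sg unfolding simple_graph_def by blast
    then have "dep x \<le> Suc (dep y)" using le by blast
    ultimately have "dep x = Suc (dep y)" using k by simp
    moreover have "E x y" using y(2) sg unfolding simple_graph_def by blast
    ultimately show ?thesis by blast
  qed
  define p where "p = (\<lambda>x. SOME y. E x y \<and> dep x = Suc (dep y))"
  have P1: "E x (p x) \<and> dep x = Suc (dep (p x))" if "x \<in> V" "x \<noteq> v" for x
    unfolding p_def using par[OF that] by (rule someI_ex)
  have pr: "pre V E v p dep"
    using sg vV P1 dep0 unfolding pre_def by blast
  have "\<forall>x y. E x y \<longrightarrow> (x \<noteq> v \<and> p x = y) \<or> (y \<noteq> v \<and> p y = x)"
    using pre.P2[OF pr] nc by blast
  then show ?thesis using pr unfolding dep_def by blast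
qed



locale rt = pre +
  assumes fin: "finite V"
   and P2: "\<And>x y. E x y \<Longrightarrow> (x \<noteq> v \<and> p x = y) \<or> (y \<noteq> v \<and> p y = x)"
begin

definition Inv :: "'a set \<Rightarrow> bool" where
  "Inv S \<longleftrightarrow> dominating V E S \<and>
     (\<forall>x \<in> S - crit V E S. x \<noteq> v \<and> p x \<notin> S \<and> (\<forall>c\<in>S. E x c \<longrightarrow> c \<in> a1 V E S))"

lemma crit_intro:
  assumes "x \<in> S" "y \<in> V" "y = x \<or> E y x" "\<forall>s\<in>S. s \<noteq> x \<longrightarrow> y \<noteq> s \<and> \<not> E y s"
  shows "x \<in> crit V E S"
  using assms unfolding crit_def dominating_def by blast

lemma crit_elim:
  assumes "dominating V E S" "x \<in> crit V E S"
  shows "\<exists>y\<in>V. (y = x \<or> E y x) \<and> (\<forall>s\<in>S. s \<noteq> x \<longrightarrow> y \<noteq> s \<and> \<not> E y s)"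
  using assms unfolding crit_def dominating_def by blast

lemma crit_sub: "crit V E S \<subseteq> S" unfolding crit_def by auto

lemma N1_iff: "y \<in> N1 V E S \<longleftrightarrow> y \<in> V \<and> y \<notin> S \<and> (\<exists>x\<in>S. E y x \<and> (\<forall>s\<in>S. E y s \<longrightarrow> s = x))"
proof -
  have eq: "y \<notin> S \<Longrightarrow> cnbhd E y \<inter> S = {s\<in>S. E y s}" unfolding cnbhd_def by auto
  have "card {s\<in>S. E y s} = 1 \<longleftrightarrow> (\<exists>x\<in>S. E y x \<and> (\<forall>s\<in>S. E y s \<longrightarrow> s = x))"
  proof -
    have "card {s\<in>S. E y s} = 1 \<longleftrightarrow> (\<exists>x. {s\<in>S. E y s} = {x})" using card_1_singleton_iff by simp
    also have "\<dots> \<longleftrightarrow> (\<exists>x\<in>S. E y x \<and> (\<forall>s\<in>S. E y s \<longrightarrow> s = x))" by blast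
    finally show ?thesis .
  qed
  then show ?thesis unfolding N1_def using eq by auto
qed


lemma a1_iff: "x \<in> a1 V E S \<longleftrightarrow> x \<in> S \<and> (\<exists>y. E x y \<and> y \<in> N1 V E S)"
proof
  assume "x \<in> a1 V E S"
  then have "x \<in> S" "cnbhd E x \<inter> N1 V E S \<noteq> {}" unfolding a1_def crit_def by auto
  then show "x \<in> S \<and> (\<exists>y. E x y \<and> y \<in> N1 V E S)" unfolding cnbhd_def N1_def by auto
next
  assume h: "x \<in> S \<and> (\<exists>y. E x y \<and> y \<in> N1 V E S)"
  then obtain y where y: "E x y" "y \<in> N1 V E S" by blast
  then have y2: "y \<in> V" "y \<notin> S" "\<forall>s\<in>S. E y s \<longrightarrow> s = x" "E y x"
    using N1_iff[of y S] Esym h by auto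
  have "x \<in> crit V E S" by (rule crit_intro) (use h y2 in auto)
  moreover have "cnbhd E x \<inter> N1 V E S \<noteq> {}" using y unfolding cnbhd_def by auto
  ultimately show "x \<in> a1 V E S" unfolding a1_def by auto
qed

lemma dom_sub: "dominating V E S \<Longrightarrow> S \<subseteq> V" unfolding dominating_def by auto

lemma min_crit: "minimal_dominating V E S \<Longrightarrow> crit V E S = S"
  unfolding minimal_dominating_def crit_def by auto

lemma notmin_sup:
  assumes "dominating V E S" "\<not> minimal_dominating V E S"
  shows "S - crit V E S \<noteq> {}"
proof -
  obtain T where T: "T \<subset> S" "dominating V E T" using assms unfolding minimal_dominating_def by blast
  then obtain x where x: "x \<in> S" "x \<notin> T" by blast
  have "dominating V E (S - {x})" using T x assms(1) unfolding dominating_def by blast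
  then show ?thesis using x unfolding crit_def by blast
qed

lemma gstep:
  assumes inv: "Inv S" and Aa: "A \<subseteq> a1 V E S" and HA: "\<forall>a\<in>A. a = v \<or> p a \<in> S - A"
  defines "N' \<equiv> {w \<in> N1 V E S. \<exists>a\<in>A. E w a}"
  defines "S' \<equiv> (S - A) \<union> N'"
  shows "Inv S' \<and> card S \<le> card S' \<and> (\<forall>w\<in>N'. p w \<in> A \<and> w \<noteq> v)"
proof -
  have domS: "dominating V E S" using inv Inv_def by auto
  have SV: "S \<subseteq> V" using domS dom_sub by auto
  have AS: "A \<subseteq> S" using Aa a1_iff by blast
  have NV: "N' \<subseteq> V" unfolding N'_def N1_def by auto
  have NS: "N' \<inter> S = {}" unfolding N'_def N1_def by auto
  have Nuniq: "\<And>w s. w \<in> N' \<Longrightarrow> s \<in> S \<Longrightarrow> E w s \<Longrightarrow> s \<in> A"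
  proof -
    fix w s assume h: "w \<in> N'" "s \<in> S" "E w s"
    then obtain a where a: "a \<in> A" "E w a" "w \<in> N1 V E S" unfolding N'_def by blast
    then show "s \<in> A" using N1_iff[of w S] h AS by blast
  qed
  have Npar: "\<And>w. w \<in> N' \<Longrightarrow> p w \<in> A \<and> w \<noteq> v"
  proof -
    fix w assume h: "w \<in> N'"
    then obtain a where a: "a \<in> A" "E w a" unfolding N'_def by blast
    have "w \<notin> S" using h NS by blast
    have "\<not> (a \<noteq> v \<and> p a = w)" using HA a(1) \<open>w \<notin> S\<close> by blast
    then show "p w \<in> A \<and> w \<noteq> v" using P2[OF a(2)] a(1) by blast
  qed
  have Anb: "\<And>a. a \<in> A \<Longrightarrow> \<exists>w\<in>N'. E a w"
  proof -
    fix a assume a: "a \<in> A"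
    then obtain y where "E a y" "y \<in> N1 V E S" using Aa a1_iff by blast
    then show "\<exists>w\<in>N'. E a w" unfolding N'_def using a Esym by blast
  qed
  have domS': "dominating V E S'"
    unfolding dominating_def
  proof (intro conjI ballI)
    show "S' \<subseteq> V" using SV NV unfolding S'_def by auto
  next
    fix y assume yV: "y \<in> V"
    show "y \<in> S' \<or> (\<exists>s\<in>S'. E y s)"
    proof (cases "y \<in> S")
      case True
      show ?thesis
      proof (cases "y \<in> A")
        case True then show ?thesis using Anb unfolding S'_def by blast
      next
        case False then show ?thesis using \<open>y \<in> S\<close> unfolding S'_def by blast
      qed
    next
      case False
      then obtain s where s: "s \<in> S" "E y s" using domS yV unfolding dominating_def by blast
      show ?thesis
      proof (cases "\<exists>s'\<in>S - A. E y s'")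
        case True then show ?thesis unfolding S'_def by blast
      next
        case nf: False
        then have sA: "s \<in> A" using s by blast
        have "\<forall>s'\<in>S. E y s' \<longrightarrow> s' = s"
        proof (intro ballI impI)
          fix s' assume s': "s' \<in> S" "E y s'"
          then have s'A: "s' \<in> A" using nf by blast
          have py: "\<And>t. t \<in> A \<Longrightarrow> E y t \<Longrightarrow> y \<noteq> v \<and> p y = t"
          proof -
            fix t assume t: "t \<in> A" "E y t"
            have "\<not> (t \<noteq> v \<and> p t = y)" using HA t(1) False by blast
            then show "y \<noteq> v \<and> p y = t" using P2[OF t(2)] by blast
          qed
          show "s' = s" using py[OF s'A s'(2)] py[OF sA s(2)] by simp
        qed
        then have "y \<in> N1 V E S" using N1_iff yV False s by blast
        then have "y \<in> N'" unfolding N'_def using sA s by blast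
        then show ?thesis unfolding S'_def by blast
      qed
    qed
  qed
  have finS: "finite S" using SV fin finite_subset by blast
  have finN: "finite N'" using NV fin finite_subset by blast
  have cardA: "card A \<le> card N'"
  proof -
    define f where "f = (\<lambda>a. SOME w. w \<in> N' \<and> E a w)"
    have f: "\<And>a. a \<in> A \<Longrightarrow> f a \<in> N' \<and> E a (f a)"
      unfolding f_def using Anb by (metis (no_types, lifting) someI_ex)
    have "inj_on f A"
    proof
      fix a b assume ab: "a \<in> A" "b \<in> A" "f a = f b"
      have "f a \<in> N'" "E (f a) a" "E (f a) b" using f ab Esym by metis+
      then show "a = b" using N1_iff[of "f a" S] AS ab unfolding N'_def by blast
    qed
    moreover have "f ` A \<subseteq> N'" using f by blast
    ultimately show ?thesis using card_inj_on_le finN by blast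
  qed
  have "card S' = card (S - A) + card N'"
    unfolding S'_def using NS finS finN by (subst card_Un_disjoint) auto
  moreover have "card (S - A) = card S - card A" using AS finS finite_subset card_Diff_subset by metis
  moreover have "card A \<le> card S" using AS finS card_mono by blast
  ultimately have cardS: "card S \<le> card S'" using cardA by linarith
  have supp: "x \<noteq> v \<and> p x \<notin> S' \<and> (\<forall>c\<in>S'. E x c \<longrightarrow> c \<in> a1 V E S')"
    if xS': "x \<in> S'" and xnc: "x \<notin> crit V E S'" for x
  proof -
    have S'V: "S' \<subseteq> V" using domS' dom_sub by blast
    have xN: "x \<notin> N'"
    proof
      assume xN: "x \<in> N'"
      have xV: "x \<in> V" using xN NV by blast
      have "x \<in> crit V E S'"
      proof (rule crit_intro[OF xS' xV])
        show "x = x \<or> E x x" by simp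
        show "\<forall>s\<in>S'. s \<noteq> x \<longrightarrow> x \<noteq> s \<and> \<not> E x s"
        proof (intro ballI impI conjI)
          fix s assume s: "s \<in> S'" "s \<noteq> x"
          then show "x \<noteq> s" by simp
          show "\<not> E x s"
          proof
            assume Exs: "E x s"
            show False
            proof (cases "s \<in> S")
              case True
              have "s \<in> A" using Nuniq[OF xN True Exs] .
              then show False using s(1) True NS unfolding S'_def by blast
            next
              case False
              then have sN: "s \<in> N'" using s unfolding S'_def by blast
              have "p x \<in> A" "p s \<in> A" using Npar xN sN by auto
              moreover have "x \<notin> S" "s \<notin> S" using xN sN NS by auto
              ultimately show False using P2[OF Exs] AS by blast
            qed
          qed
        qed
      qed
      then show False using xnc by blast
    qed
    then have xS: "x \<in> S" "x \<notin> A" using xS' unfolding S'_def by auto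
    have xV: "x \<in> V" using xS SV by blast
    have childN: "\<And>c. c \<in> N' \<Longrightarrow> \<not> E x c"
      using Nuniq xS Esym by blast
    show ?thesis
    proof (cases "x \<in> crit V E S")
      case False
      then have ix: "x \<noteq> v" "p x \<notin> S" "\<forall>c\<in>S. E x c \<longrightarrow> c \<in> a1 V E S"
        using inv xS unfolding Inv_def by auto
      have pxN: "p x \<notin> N'" using childN P1[OF xV ix(1)] by blast
      have ch: "\<forall>c\<in>S'. E x c \<longrightarrow> c \<in> a1 V E S'"
      proof (intro ballI impI)
        fix c assume c: "c \<in> S'" "E x c"
        then have cS: "c \<in> S" "c \<notin> A" using childN unfolding S'_def by auto
        have pc: "p c = x" "c \<noteq> v" using P2[OF c(2)] ix(2) cS by auto
        obtain y where y: "E c y" "y \<in> N1 V E S" using ix(3) cS c a1_iff by blast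
        have y2: "y \<in> V" "y \<notin> S" "\<forall>s\<in>S. E y s \<longrightarrow> s = c"
          using N1_iff[of y S] y cS Esym by auto
        have yN: "y \<notin> N'" using Nuniq y Esym cS by blast
        have "\<forall>s\<in>S'. E y s \<longrightarrow> s = c"
        proof (intro ballI impI)
          fix s assume s: "s \<in> S'" "E y s"
          show "s = c"
          proof (cases "s \<in> S")
            case True then show ?thesis using y2 s by blast
          next
            case False
            then have sN: "s \<in> N'" using s unfolding S'_def by blast
            have psA: "p s \<in> A" using Npar sN by blast
            have "p s \<noteq> y" using psA AS y2 by blast
            then have pys: "p y = s" using P2[OF s(2)] by blast
            have "p c = y \<or> p y = c" using P2[OF y(1)] by blast
            then show ?thesis using pc pys xS y2 False cS by auto
          qed
        qed
        then have "y \<in> N1 V E S'" using N1_iff[of y S'] y2 yN cS Esym[OF y(1)] unfolding S'_def by blast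
        then show "c \<in> a1 V E S'" using a1_iff c y(1) by blast
      qed
      show ?thesis using ix pxN ch unfolding S'_def by blast
    next
      case True
      obtain y where y: "y \<in> V" "y = x \<or> E y x" "\<forall>s\<in>S. s \<noteq> x \<longrightarrow> y \<noteq> s \<and> \<not> E y s"
        using crit_elim[OF domS True] by blast
      have "\<not> (\<forall>s\<in>S'. s \<noteq> x \<longrightarrow> y \<noteq> s \<and> \<not> E y s)"
        using crit_intro[OF xS' y(1) y(2)] xnc by blast
      then obtain w where w: "w \<in> S'" "w \<noteq> x" "y = w \<or> E y w" by blast
      have wN: "w \<in> N'" using w y(3) unfolding S'_def by blast
      have wS: "w \<notin> S" using wN NS by blast
      have ywne: "y \<noteq> w"
      proof
        assume "y = w"
        then have "E w x" using y(2) xS wS by auto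
        then show False using Nuniq wN xS by blast
      qed
      then have Eyw: "E y w" using w by blast
      have pwA: "p w \<in> A" using Npar wN by blast
      have "p w \<noteq> y"
      proof
        assume "p w = y"
        then have "y \<in> S" "y \<noteq> x" using pwA AS xS by auto
        then show False using y(3) by blast
      qed
      then have pyw: "y \<noteq> v" "p y = w" using P2[OF Eyw] by auto
      have yS: "y \<notin> S"
      proof
        assume "y \<in> S"
        then have "y \<in> A" using Nuniq wN Esym[OF Eyw] by blast
        then have "p y = v \<or> p y \<in> S" using HA pyw by auto
        then show False using pyw(2) wS HA \<open>y \<in> A\<close> pyw(1) by auto
      qed
      have yx: "y \<noteq> x" using yS xS by blast
      then have Eyx: "E y x" using y(2) by blast
      have pxy: "x \<noteq> v" "p x = y" using P2[OF Eyx] pyw wS xS by auto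
      have yN: "y \<notin> N'" using Npar[of y] pyw pwA AS wS by auto
      have pxS': "p x \<notin> S'" using pxy yS yN unfolding S'_def by blast
      have ch: "\<forall>c\<in>S'. E x c \<longrightarrow> c \<in> a1 V E S'"
      proof (intro ballI impI)
        fix c assume c: "c \<in> S'" "E x c"
        then have cS: "c \<in> S" "c \<notin> A" using childN unfolding S'_def by auto
        have pc: "p c = x" "c \<noteq> v" using P2[OF c(2)] pxy yS cS by auto
        have ccrit: "c \<in> crit V E S"
        proof (rule ccontr)
          assume "c \<notin> crit V E S"
          then have "p c \<notin> S" using inv cS unfolding Inv_def by auto
          then show False using pc xS by simp
        qed
        obtain z where z: "z \<in> V" "z = c \<or> E z c" "\<forall>s\<in>S. s \<noteq> c \<longrightarrow> z \<noteq> s \<and> \<not> E z s"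
          using crit_elim[OF domS ccrit] by blast
        have xc: "x \<noteq> c" using c(2) EV by blast
        have zc: "z \<noteq> c" using z(3) xS xc Esym[OF c(2)] by blast
        then have Ezc: "E z c" using z(2) by blast
        have zS: "z \<notin> S" using z(3) zc by blast
        have "z \<noteq> x" using xS zS by blast
        then have pz: "p z = c" using P2[OF Ezc] pc by auto
        have zN: "z \<notin> N'" using Npar[of z] pz cS by auto
        have "\<forall>s\<in>S'. E z s \<longrightarrow> s = c"
        proof (intro ballI impI)
          fix s assume s: "s \<in> S'" "E z s"
          show "s = c"
          proof (cases "s \<in> S")
            case True then show ?thesis using z(3) s by blast
          next
            case False
            then have sN: "s \<in> N'" using s unfolding S'_def by blast
            have psA: "p s \<in> A" using Npar sN by blast
            have "p s \<noteq> z" using psA AS zS by blast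
            then have "p z = s" using P2[OF s(2)] by blast
            then show ?thesis using pz by simp
          qed
        qed
        then have "z \<in> N1 V E S'" using N1_iff[of z S'] z(1) zS zN cS Ezc unfolding S'_def by blast
        then show "c \<in> a1 V E S'" using a1_iff c Esym[OF Ezc] by blast
      qed
      show ?thesis using pxy(1) pxS' ch by blast
    qed
  qed
  have "Inv S'" unfolding Inv_def using domS' supp by blast
  then show ?thesis using cardS Npar by auto
qed


definition Phi :: "'a set \<Rightarrow> nat" where
  "Phi S = (\<Sum>x\<in>S. (Suc (card V)) ^ (Max (dep ` V) - dep x))"

lemma astep:
  assumes inv: "Inv S" and st: "alg_step V E v S S'"
  shows "Inv S' \<and> card S \<le> card S' \<and> Phi S' < Phi S"
proof -
  obtain u where u: "u \<in> S - crit V E S"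
    and S'eq: "S' = (S - {a \<in> a1 V E S. E a u}) \<union> {w \<in> N1 V E S. \<exists>a\<in>{a \<in> a1 V E S. E a u}. E w a}"
    using st unfolding alg_step_def Let_def by blast
  define A where "A = {a \<in> a1 V E S. E a u}"
  define N' where "N' = {w \<in> N1 V E S. \<exists>a\<in>A. E w a}"
  have S'2: "S' = (S - A) \<union> N'" using S'eq unfolding A_def N'_def by simp
  have domS: "dominating V E S" using inv Inv_def by auto
  have SV: "S \<subseteq> V" using domS dom_sub by auto
  have iu: "u \<noteq> v" "p u \<notin> S" "\<forall>c\<in>S. E u c \<longrightarrow> c \<in> a1 V E S"
    using inv u unfolding Inv_def by auto
  have uS: "u \<in> S" using u by blast
  have unA: "u \<notin> A" using u unfolding A_def a1_def by blast
  have AS: "A \<subseteq> S" unfolding A_def using a1_iff by blast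
  have Ach: "a \<noteq> v \<and> p a = u" if aA: "a \<in> A" for a
  proof -
    have Eua: "E u a" using aA Esym unfolding A_def by blast
    have "a \<in> S" using aA AS by blast
    then show ?thesis using P2[OF Eua] iu(2) by auto
  qed
  have HA: "\<forall>a\<in>A. a = v \<or> p a \<in> S - A" using Ach uS unA by auto
  have Aa: "A \<subseteq> a1 V E S" unfolding A_def by blast
  have g: "Inv S' \<and> card S \<le> card S' \<and> (\<forall>w\<in>N'. p w \<in> A \<and> w \<noteq> v)"
    using gstep[OF inv Aa HA] unfolding S'2 N'_def by blast
  have "dominating V E (S - {u})" using u unfolding crit_def by blast
  moreover have "u \<in> V" using uS SV by blast
  ultimately obtain s where s: "s \<in> S" "s \<noteq> u" "E u s" unfolding dominating_def by blast
  have sA: "s \<in> A" unfolding A_def using iu(3) s Esym by blast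
  then obtain y where y: "E s y" "y \<in> N1 V E S" using Aa a1_iff by blast
  have yN: "y \<in> N'" unfolding N'_def using y sA Esym by blast
  define K where "K = Suc (card V)"
  define H where "H = Max (dep ` V)"
  define d where "d = dep u"
  have depA: "dep a = Suc d" if "a \<in> A" for a
    using P1[of a] Ach[OF that] that AS SV unfolding d_def by auto
  have NV: "N' \<subseteq> V" unfolding N'_def N1_def by auto
  have depN: "dep w = Suc (Suc d)" if "w \<in> N'" for w
  proof -
    have "p w \<in> A" "w \<noteq> v" using g that by auto
    then show ?thesis using P1[of w] depA that NV by auto
  qed
  have "dep y \<le> H" unfolding H_def using fin yN NV by (intro Max_ge) auto
  then have Hd: "Suc (Suc d) \<le> H" using depN[OF yN] by simp
  define c2 where "c2 = K ^ (H - Suc (Suc d))"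
  have c1: "K ^ (H - Suc d) = K * c2" unfolding c2_def using Hd
    by (metis Suc_diff_Suc Suc_le_lessD power_Suc)
  have finS: "finite S" using SV fin finite_subset by blast
  have finN: "finite N'" using NV fin finite_subset by blast
  have finA: "finite A" using AS finS finite_subset by blast
  have NS: "N' \<inter> S = {}" unfolding N'_def N1_def by auto
  have PhiS: "Phi S = Phi (S - A) + Phi A" unfolding Phi_def using AS finS by (rule sum.subset_diff)
  have PhiS': "Phi S' = Phi (S - A) + Phi N'" unfolding Phi_def S'2 using NS finS finN
    by (intro sum.union_disjoint) auto
  have PhiX: "Phi X = (\<Sum>x\<in>X. K ^ (H - dep x))" for X unfolding Phi_def K_def H_def by simp
  have PhiA: "Phi A = card A * (K * c2)"
  proof -
    have "Phi A = (\<Sum>x\<in>A. K * c2)" unfolding PhiX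
      by (rule sum.cong) (auto simp: depA c1)
    then show ?thesis by simp
  qed
  have PhiN: "Phi N' = card N' * c2"
  proof -
    have "Phi N' = (\<Sum>x\<in>N'. c2)" unfolding PhiX
      by (rule sum.cong) (auto simp: depN c2_def)
    then show ?thesis by simp
  qed
  have "card N' \<le> card V" using NV fin card_mono by blast
  then have "card N' < K" unfolding K_def by simp
  moreover have "c2 > 0" unfolding c2_def K_def by simp
  ultimately have "card N' * c2 < K * c2" by simp
  moreover have "card A \<ge> 1" using sA finA card_0_eq[OF finA] by fastforce
  then have "K * c2 \<le> card A * (K * c2)" by simp
  ultimately have "Phi N' < Phi A" using PhiA PhiN by linarith
  then have "Phi S' < Phi S" using PhiS PhiS' by linarith
  then show ?thesis using g by blast
qed

lemma no_inf:
  assumes "Inv S0" shows "\<nexists>f. f 0 = S0 \<and> (\<forall>i. alg_step V E v (f i) (f (Suc i)))"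
proof
  assume "\<exists>f. f 0 = S0 \<and> (\<forall>i. alg_step V E v (f i) (f (Suc i)))"
  then obtain f where f0: "f 0 = S0" and fs: "\<forall>i. alg_step V E v (f i) (f (Suc i))" by blast
  have "Inv (f i) \<and> Phi (f i) + i \<le> Phi S0" for i
  proof (induction i)
    case 0 then show ?case using f0 assms by simp
  next
    case (Suc i)
    then show ?case using astep[of "f i" "f (Suc i)"] fs by fastforce
  qed
  from this[of "Suc (Phi S0)"] show False by simp
qed

lemma reach_inv:
  assumes "Inv S0" "(alg_step V E v)\<^sup>*\<^sup>* S0 S"
  shows "Inv S \<and> card S0 \<le> card S"
  using assms(2)
proof (induction rule: rtranclp_induct)
  case base then show ?case using assms(1) by simp
next
  case (step y z) then show ?case using astep[of y z] by fastforce
qed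

lemma has_step:
  assumes "Inv S" "\<not> minimal_dominating V E S"
  shows "\<exists>S''. alg_step V E v S S''"
proof -
  have dS: "dominating V E S" using assms Inv_def by auto
  obtain x where x: "x \<in> S - crit V E S" using notmin_sup[OF dS assms(2)] by blast
  obtain u where u: "u \<in> S - crit V E S" "\<forall>u'. u' \<in> S - crit V E S \<longrightarrow> gdist E v u \<le> gdist E v u'"
    using ex_has_least_nat[of "\<lambda>u. u \<in> S - crit V E S" x "gdist E v"] x by blast
  show ?thesis unfolding alg_step_def Let_def using assms(2) u by blast
qed

end

theorem main_thm:
  fixes V :: "'a set" and E :: "'a \<Rightarrow> 'a \<Rightarrow> bool" and M :: "'a set" and v :: 'a
  assumes T: "is_tree V E"
    and MD: "minimal_dominating V E M"
    and vM: "v \<in> a1 V E M"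
  defines "M0 \<equiv> (M - {v}) \<union> (cnbhd E v \<inter> N1 V E M)"
  shows "card M \<le> card M0
    \<and> (\<nexists>f. f 0 = M0 \<and> (\<forall>i. alg_step V E v (f i) (f (Suc i))))
    \<and> (\<forall>M'. (alg_step V E v)\<^sup>*\<^sup>* M0 M' \<longrightarrow>
          (minimal_dominating V E M' \<and> card M0 \<le> card M') \<or> (\<exists>M''. alg_step V E v M' M''))"
proof -
  have vcrit: "v \<in> M" using vM unfolding a1_def crit_def by blast
  have domM: "dominating V E M" using MD minimal_dominating_def by blast
  have vV: "v \<in> V" using vcrit domM unfolding dominating_def by blast
  obtain p where pr: "pre V E v p (gdist E v)"
    and p2: "\<forall>x y. E x y \<longrightarrow> (x \<noteq> v \<and> p x = y) \<or> (y \<noteq> v \<and> p y = x)"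
    using tree_parent[OF T vV] by blast
  have finV: "finite V" using T is_tree_def by blast
  interpret R: rt V E v p "gdist E v"
    using pr p2 finV unfolding rt_def rt_axioms_def by blast
  have invM: "R.Inv M" unfolding R.Inv_def using domM R.min_crit[OF MD] by blast
  have Aa: "{v} \<subseteq> a1 V E M" using vM by blast
  have HA: "\<forall>a\<in>{v}. a = v \<or> p a \<in> M - {v}" by blast
  have M0eq: "M0 = (M - {v}) \<union> {w \<in> N1 V E M. \<exists>a\<in>{v}. E w a}"
    unfolding M0_def cnbhd_def N1_def using vcrit R.Esym by blast
  have g: "R.Inv M0" "card M \<le> card M0"
    using R.gstep[OF invM Aa HA] unfolding M0eq by blast+
  have p3: "\<forall>M'. (alg_step V E v)\<^sup>*\<^sup>* M0 M' \<longrightarrow>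
          (minimal_dominating V E M' \<and> card M0 \<le> card M') \<or> (\<exists>M''. alg_step V E v M' M'')"
    using R.reach_inv[OF g(1)] R.has_step by blast
  show ?thesis using g R.no_inf[OF g(1)] p3 by blast
qed


theorem theorem4p5:
  fixes V :: "'a set" and E :: "'a \<Rightarrow> 'a \<Rightarrow> bool" and M :: "'a set" and v :: 'a
  assumes "is_tree V E"
    and "minimal_dominating V E M"
    and "v \<in> a1 V E M"
  defines "M0 \<equiv> (M - {v}) \<union> (cnbhd E v \<inter> N1 V E M)"
  shows "card M \<le> card M0
    \<and> (\<nexists>f. f 0 = M0 \<and> (\<forall>i. alg_step V E v (f i) (f (Suc i))))
    \<and> (\<forall>M'. (alg_step V E v)\<^sup>*\<^sup>* M0 M' \<longrightarrow>
          (minimal_dominating V E M' \<and> card M0 \<le> card M') \<or> (\<exists>M''. alg_step V E v M' M''))"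
    unfolding M0_def by (rule main_thm[OF assms(1,2,3)])

end
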